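(* Let $\Lambda$ be a finite set of pixels, $S=\{0,1\}^{\Lambda}$, and let $S_I\subseteq S$ be a nonempty set (the images with label $1$), with $N_I=|S_I|$. Let $F:S\to\{0,1\}$ be its indicator function and $f=F/\sqrt{N_I}$ its normalization. Partition $\Lambda=A\sqcup B$, identify $s\in S$ with $(s_A,s_B)\in\{0,1\}^A\times\{0,1\}^B$, let $\partial\subseteq A$ be a set of boundary pixels with $|\partial|=L_{AB}$, and let $R\subseteq A$ be a region adjacent to the boundary with $|R|=r\,L_{AB}$. Assume: (1) if $s,s'\in S_I$ satisfy $s_B=s'_B$, then $s|_{\partial}=s'|_{\partial}$; (2) for $s_A,s'_A\in\{0,1\}^A$ each of which is extendable (i.e. there is some $s_B$ with $(s_A,s_B)\in S_I$), the number $N_{s_A s'_A}=\#\{s_B\in\{0,1\}^B:(s_A,s_B)\in S_I\text{ and }(s'_A,s_B)\in S_I\}$ depends only on the restrictions $s_A|_R$ and $s'_A|_R$. Then the bipartite entanglement entropy of $f$ satisfies $S_{AB}\le r\,L_{AB}\log 2$.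
   Context: For $f:S\to\mathbb{C}$ with $\sum_s|f(s)|^2=1$, its density matrix is $\rho_{s,s'}=\overline{f(s)}\,f(s')$, and the reduced density matrix on $A$ is $\rho^A_{s_A,s'_A}=\sum_{s_B\in\{0,1\}^B}\rho_{(s_A,s_B),(s'_A,s_B)}$. The bipartite entanglement entropy is $S_{AB}=S_A=-\mathrm{tr}(\rho^A\log\rho^A)$ (computed from the eigenvalues of $\rho^A$, with $0\log 0=0$). *)

theory Defs
  imports "HOL-Analysis.Analysis" "HOL-Computational_Algebra.Polynomial"
begin

text \<open>Configurations s of S = {0,1}^Lambda, Lambda = A + B, are identified with pairs
  (s_A, s_B) where s_A :: 'a => bool (pixels of A) and s_B :: 'b => bool (pixels of B).\<close>

definition reduced_density ::
  "(('x::finite) \<times> ('y::finite) \<Rightarrow> complex) \<Rightarrow> complex ^ 'x ^ 'x" where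
  "reduced_density f = (\<chi> x x'. \<Sum>y\<in>UNIV. cnj (f (x, y)) * f (x', y))"

definition charpoly :: "'c::comm_ring_1 ^ 'n ^ 'n \<Rightarrow> 'c poly" where
  "charpoly M = det (\<chi> i j. (if i = j then [:0, 1:] else 0) - [:M $ i $ j:])"

definition eigenvalue_list :: "complex ^ 'n ^ 'n \<Rightarrow> complex list" where
  "eigenvalue_list M = (SOME es. charpoly M = (\<Prod>e\<leftarrow>es. [:- e, 1:]))"

text \<open>von Neumann entropy -tr(M log M) = - sum over eigenvalues of lambda log lambda
  (natural log; ln 0 = 0 in Isabelle, so 0 log 0 = 0).\<close>
definition vn_entropy :: "complex ^ 'n ^ 'n \<Rightarrow> real" where
  "vn_entropy M = - (\<Sum>e\<leftarrow>eigenvalue_list M. Re e * ln (Re e))"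

end

theory Submission
  imports Defs "HOL-Computational_Algebra.Fundamental_Theorem_Algebra"
begin


lemma lin_prod_list:
  fixes es :: "'a::comm_ring_1 list"
  shows "coeff (\<Prod>e\<leftarrow>es. [:- e, 1:]) (length es) = 1 \<and>
         degree (\<Prod>e\<leftarrow>es. [:- e, 1:]) = length es \<and>
         (\<forall>k. length es = Suc k \<longrightarrow> coeff (\<Prod>e\<leftarrow>es. [:- e, 1:]) k = - sum_list es)"
proof (induction es)
  case Nil
  then show ?case by simp
next
  case (Cons a es)
  define q where "q = (\<Prod>e\<leftarrow>es. [:- e, 1:])"
  have q1: "coeff q (length es) = 1" and qd: "degree q = length es"
    and q2: "\<And>k. length es = Suc k \<Longrightarrow> coeff q k = - sum_list es"
    using Cons.IH unfolding q_def by auto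
  have eq: "(\<Prod>e\<leftarrow>a # es. [:- e, 1:]) = smult (-a) q + pCons 0 q"
    by (simp add: q_def mult_pCons_left)
  have qn0: "q \<noteq> 0" using q1 by auto
  have c1: "coeff (smult (-a) q + pCons 0 q) (Suc (length es)) = 1"
    using q1 qd by (simp add: coeff_eq_0)
  have d1: "degree (smult (-a) q + pCons 0 q) = Suc (length es)"
  proof (rule antisym)
    show "degree (smult (- a) q + pCons 0 q) \<le> Suc (length es)"
      by (rule degree_le) (auto simp: coeff_eq_0 qd coeff_pCons split: nat.splits)
    show "Suc (length es) \<le> degree (smult (- a) q + pCons 0 q)"
      using c1 by (intro le_degree) auto
  qed
  have c2: "coeff (smult (-a) q + pCons 0 q) (length es) = - sum_list (a # es)"
  proof (cases es)
    case Nil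
    then show ?thesis by (simp add: q_def)
  next
    case (Cons b bs)
    then have "length es = Suc (length bs)" by simp
    then show ?thesis using q1 q2[of "length bs"] by simp
  qed
  show ?case unfolding eq using c1 d1 c2 by simp
qed

lemma order0_prod_list:
  fixes es :: "'a::idom list"
  shows "order 0 (\<Prod>e\<leftarrow>es. [:- e, 1:]) = length (filter (\<lambda>e. e = 0) es)"
proof (induction es)
  case Nil
  then show ?case by (simp add: order_0I)
next
  case (Cons a es)
  have nz: "(\<Prod>e\<leftarrow>es. [:- e, 1:]) \<noteq> 0" by (auto simp: prod_list_zero_iff)
  have a0: "[:-a,1:] \<noteq> 0" by simp
  have m0: "[:-a,1:] * (\<Prod>e\<leftarrow>es. [:- e, 1:]) \<noteq> 0" using nz a0 by (metis mult_eq_0_iff)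
  have "order 0 (\<Prod>e\<leftarrow>a#es. [:- e, 1:]) = order 0 ([:-a,1:] * (\<Prod>e\<leftarrow>es. [:- e, 1:]))"
    by simp
  also have "\<dots> = order 0 [:-a,1:] + order 0 (\<Prod>e\<leftarrow>es. [:- e, 1:])"
    by (rule order_mult[OF m0])
  finally have "order 0 (\<Prod>e\<leftarrow>a#es. [:- e, 1:]) = order 0 [:-a,1:] + order 0 (\<Prod>e\<leftarrow>es. [:- e, 1:])" .
  moreover have "order 0 [:-a,1:] = (if a = 0 then 1 else 0)"
  proof (cases "a = 0")
    case True
    then show ?thesis using order_power_n_n[of 0 1] by simp
  next
    case False
    then show ?thesis by (simp add: order_0I)
  qed
  ultimately show ?case using Cons.IH by simp
qed

lemma complex_split:
  fixes p :: "complex poly"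
  assumes "lead_coeff p = 1"
  shows "\<exists>es. p = (\<Prod>e\<leftarrow>es. [:- e, 1:])"
  using assms
proof (induction "degree p" arbitrary: p)
  case 0
  then have "p = [:1:]" by (metis degree_0_id)
  then show ?case by (intro exI[of _ "[]"]) simp
next
  case (Suc n)
  have "\<not> constant (poly p)"
    using Suc.hyps(2) by (metis constant_degree nat.distinct(1))
  then obtain z where z: "poly p z = 0" using fundamental_theorem_of_algebra by blast
  then have "[:-z,1:] dvd p" by (simp add: poly_eq_0_iff_dvd)
  then obtain q where q: "p = [:-z,1:] * q" by (rule dvdE)
  have qn0: "q \<noteq> 0" using q Suc.prems by auto
  have "degree ([:-z,1:] * q) = degree [:-z,1:] + degree q" by (rule degree_mult_eq) (use qn0 in auto)
  then have dq: "degree p = Suc (degree q)" using q by simp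
  have "lead_coeff ([:-z,1:] * q) = lead_coeff [:-z,1:] * lead_coeff q" by (rule lead_coeff_mult)
  then have "lead_coeff q = 1" using Suc.prems q by simp
  then obtain es where "q = (\<Prod>e\<leftarrow>es. [:- e, 1:])" using Suc.hyps(1)[of q] dq Suc.hyps(2) by auto
  then show ?case using q by (intro exI[of _ "z # es"]) simp
qed

lemma entropy_bound:
  fixes xs :: "real list"
  assumes nn: "\<forall>x\<in>set xs. x \<ge> 0" and s: "sum_list xs = 1"
  shows "- (\<Sum>x\<leftarrow>xs. x * ln x) \<le> ln (real (length (filter (\<lambda>x. x \<noteq> 0) xs)))"
proof -
  define K where "K = real (length (filter (\<lambda>x. x \<noteq> 0) xs))"
  have cnt: "(\<Sum>x\<leftarrow>xs. if x \<noteq> 0 then c else 0) = real (length (filter (\<lambda>x. x \<noteq> 0) xs)) * c" for c :: real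
    by (induction xs) (auto simp: algebra_simps)
  have Kpos: "K > 0"
  proof (rule ccontr)
    assume "\<not> K > 0"
    then have "filter (\<lambda>x. x \<noteq> 0) xs = []" unfolding K_def by simp
    then have "\<forall>x\<in>set xs. x = 0" by (simp add: filter_empty_conv)
    then have "sum_list xs = 0" by (induction xs) auto
    with s show False by simp
  qed
  have eqK: "(\<Sum>x\<leftarrow>xs. x * ln K) = sum_list xs * ln K" for xs
    by (induction xs) (auto simp: algebra_simps)
  have pt: "- (x * ln x) - x * ln K \<le> (if x \<noteq> 0 then 1 / K else 0) - x" if "x \<ge> 0" for x
  proof (cases "x = 0")
    case True then show ?thesis by simp
  next
    case False
    then have xp: "x > 0" using that by simp
    have "- (x * ln x) - x * ln K = x * ln (1 / (K * x))"
      using xp Kpos by (simp add: ln_div ln_mult algebra_simps)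
    also have "\<dots> \<le> x * (1 / (K * x) - 1)"
      using xp Kpos by (intro mult_left_mono ln_le_minus_one) auto
    also have "\<dots> = 1 / K - x" using xp Kpos by (simp add: field_simps)
    finally show ?thesis using False by simp
  qed
  have "(\<Sum>x\<leftarrow>xs. - (x * ln x) - x * ln K) \<le> (\<Sum>x\<leftarrow>xs. (if x \<noteq> 0 then 1 / K else 0) - x)"
    using nn pt by (intro sum_list_mono) auto
  also have "\<dots> = K * (1 / K) - 1"
    using cnt[of "1/K"] s by (simp add: sum_list_subtractf K_def)
  also have "\<dots> = 0" using Kpos by simp
  finally have "(\<Sum>x\<leftarrow>xs. - (x * ln x)) - (\<Sum>x\<leftarrow>xs. x) * ln K \<le> 0"
    by (simp add: sum_list_subtractf eqK)
  moreover have "(\<Sum>x\<leftarrow>xs. - (x * ln x)) = - (\<Sum>x\<leftarrow>xs. x * ln x)" for xs :: "real list"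
    by (induction xs) auto
  ultimately show ?thesis using s by (simp add: K_def)
qed




lemma poly_det: "poly (det (M :: 'a::comm_ring_1 poly ^'n^'n)) z = det (\<chi> i j. poly (M$i$j) z)"
  unfolding det_def by (simp add: poly_sum poly_prod)

lemma perm_fixed_card:
  assumes p: "p permutes (UNIV::'n::finite set)" and np: "p \<noteq> id"
  shows "card {i. p i = i} + 2 \<le> CARD('n)"
proof -
  obtain i where i: "p i \<noteq> i" using np by (metis eq_id_iff)
  have inj: "inj p" using p by (rule permutes_inj)
  have pi: "p (p i) \<noteq> p i" using i inj by (metis injD)
  have sub: "{i, p i} \<subseteq> UNIV - {j. p j = j}" using i pi by auto
  have "card {i, p i} = 2" using i by simp
  then have "2 \<le> card (UNIV - {j. p j = j})" using sub by (metis card_mono finite)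
  also have "\<dots> = CARD('n) - card {j. p j = j}" by (rule card_Diff_subset) auto
  finally show ?thesis
    using card_mono[of UNIV "{j. p j = j}"] by auto
qed

lemma charpoly_split:
  fixes A :: "'a::comm_ring_1 ^'n^'n"
  shows "\<exists>Rest. charpoly A = (\<Prod>i\<in>UNIV. [:- (A$i$i), 1:]) + Rest \<and>
            (\<forall>k. CARD('n) \<le> Suc k \<longrightarrow> coeff Rest k = 0)"
proof -
  define CM where "CM = (\<chi> i j. (if i = j then [:0, 1:] else 0) - [:A $ i $ j:])"
  have cp: "charpoly A = det CM" unfolding charpoly_def CM_def ..
  define P where "P = {p. p permutes (UNIV :: 'n set)}"
  define t where "t = (\<lambda>p. of_int (sign p) * prod (\<lambda>i. CM$i$p i) (UNIV :: 'n set))"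
  have fin: "finite P" unfolding P_def by (rule finite_permutations) simp
  have idP: "id \<in> P" unfolding P_def by (simp add: permutes_id)
  have "det CM = t id + sum t (P - {id})"
    unfolding det_def P_def[symmetric] t_def[symmetric]
    using sum.remove[OF fin idP, of t] by simp
  moreover have "t id = (\<Prod>i\<in>UNIV. [:- (A$i$i), 1:])"
    unfolding t_def CM_def by (simp add: sign_id)
  moreover have "coeff (sum t (P - {id})) k = 0" if k: "CARD('n) \<le> Suc k" for k
  proof -
    have "coeff (t p) k = 0" if p: "p \<in> P - {id}" for p
    proof -
      have pp: "p permutes UNIV" "p \<noteq> id" using p unfolding P_def by auto
      have de: "degree (CM$i$j) \<le> (if i = j then 1 else 0)" for i j
        unfolding CM_def by auto
      have "degree (prod (\<lambda>i. CM$i$p i) UNIV) \<le> sum (degree \<circ> (\<lambda>i. CM$i$p i)) UNIV"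
        by (rule degree_prod_sum_le) simp
      also have "\<dots> \<le> (\<Sum>i\<in>UNIV. if p i = i then 1 else 0)"
        by (rule sum_mono) (use de in \<open>auto simp: eq_commute\<close>)
      also have "\<dots> = card {i. p i = i}" using sum.inter_filter[of UNIV "\<lambda>_. 1::nat" "\<lambda>i. p i = i"] by simp
      finally have d1: "degree (prod (\<lambda>i. CM$i$p i) UNIV) \<le> card {i. p i = i}" .
      have "degree (t p) \<le> degree (prod (\<lambda>i. CM$i$p i) UNIV)"
        unfolding t_def of_int_poly using degree_mult_le[of "[:of_int (sign p):]" "prod (\<lambda>i. CM$i$p i) UNIV"]
        by simp
      then have "degree (t p) < k" using d1 perm_fixed_card[OF pp] k by linarith
      then show ?thesis by (rule coeff_eq_0)
    qed
    then show ?thesis by (simp add: coeff_sum)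
  qed
  ultimately show ?thesis unfolding cp by (intro exI[of _ "sum t (P - {id})"]) simp
qed

lemma charpoly_props:
  fixes A :: "'a::comm_ring_1 ^'n^'n"
  shows "coeff (charpoly A) CARD('n) = 1 \<and> degree (charpoly A) = CARD('n) \<and>
         coeff (charpoly A) (CARD('n) - 1) = - (\<Sum>i\<in>UNIV. A$i$i)"
proof -
  obtain Rest where cp: "charpoly A = (\<Prod>i\<in>UNIV. [:- (A$i$i), 1:]) + Rest"
    and R: "\<And>k. CARD('n) \<le> Suc k \<Longrightarrow> coeff Rest k = 0"
    using charpoly_split[of A] by blast
  obtain xs where xs: "set xs = (UNIV :: 'n set)" "distinct xs"
    using finite_distinct_list[of "UNIV :: 'n set"] by auto
  have len: "length xs = CARD('n)" using xs distinct_card by fastforce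
  define es where "es = map (\<lambda>i. A$i$i) xs"
  have P: "(\<Prod>i\<in>UNIV. [:- (A$i$i), 1:]) = (\<Prod>e\<leftarrow>es. [:- e, 1:])"
    unfolding es_def xs(1)[symmetric] prod.distinct_set_conv_list[OF xs(2)] by (simp add: o_def)
  have S: "(\<Sum>i\<in>UNIV. A$i$i) = sum_list es"
    unfolding es_def xs(1)[symmetric] sum.distinct_set_conv_list[OF xs(2)] ..
  have les: "length es = CARD('n)" unfolding es_def using len by simp
  note L = lin_prod_list[of es]
  have n0: "CARD('n) = Suc (CARD('n) - 1)" by simp
  have c1: "coeff (charpoly A) CARD('n) = 1" using L R[of "CARD('n)"] les unfolding cp P by simp
  have c2: "coeff (charpoly A) (CARD('n) - 1) = - (\<Sum>i\<in>UNIV. A$i$i)"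
    using L R[of "CARD('n) - 1"] les n0 unfolding cp P S by (metis add_cancel_right_right coeff_add order_refl)
  have dR: "degree Rest < CARD('n)"
  proof -
    have "degree Rest \<le> CARD('n) - 1" by (rule degree_le) (use R in auto)
    moreover have "0 < CARD('n)" by (rule finite_UNIV_card_ge_0) simp
    ultimately show ?thesis by linarith
  qed
  have "degree (charpoly A) = CARD('n)"
    unfolding cp using L les dR P by (metis degree_add_eq_left)
  with c1 c2 show ?thesis by simp
qed




lemma quad_form:
  fixes f :: "('x::finite) \<times> ('y::finite) \<Rightarrow> complex" and v :: "complex ^ 'x"
  shows "(\<Sum>i\<in>UNIV. cnj (v$i) * (reduced_density f *v v)$i)
       = (\<Sum>y\<in>UNIV. cnj (\<Sum>j\<in>UNIV. f (j, y) * v$j) * (\<Sum>j\<in>UNIV. f (j, y) * v$j))"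
proof -
  define g where "g i j y = cnj (v$i) * (cnj (f (i, y)) * f (j, y) * v$j)" for i j y
  have rv: "(reduced_density f *v v)$i = (\<Sum>j\<in>UNIV. (\<Sum>y\<in>UNIV. cnj (f (i, y)) * f (j, y)) * v$j)" for i
    unfolding reduced_density_def matrix_vector_mult_def by simp
  have "cnj (v$i) * (reduced_density f *v v)$i = (\<Sum>j\<in>UNIV. \<Sum>y\<in>UNIV. g i j y)" for i
    unfolding rv g_def by (simp only: sum_distrib_left sum_distrib_right)
  then have "(\<Sum>i\<in>UNIV. cnj (v$i) * (reduced_density f *v v)$i) = (\<Sum>i\<in>UNIV. \<Sum>j\<in>UNIV. \<Sum>y\<in>UNIV. g i j y)"
    by simp
  also have "\<dots> = (\<Sum>i\<in>UNIV. \<Sum>y\<in>UNIV. \<Sum>j\<in>UNIV. g i j y)"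
    by (rule sum.cong[OF refl], rule sum.swap)
  also have "\<dots> = (\<Sum>y\<in>UNIV. \<Sum>i\<in>UNIV. \<Sum>j\<in>UNIV. g i j y)"
    by (rule sum.swap)
  also have "\<dots> = (\<Sum>y\<in>UNIV. cnj (\<Sum>j\<in>UNIV. f (j, y) * v$j) * (\<Sum>j\<in>UNIV. f (j, y) * v$j))"
  proof (rule sum.cong[OF refl])
    fix y
    have "cnj (\<Sum>j\<in>UNIV. f (j, y) * v$j) = (\<Sum>i\<in>UNIV. cnj (f (i, y)) * cnj (v$i))"
      by (simp add: cnj_sum)
    then have "cnj (\<Sum>j\<in>UNIV. f (j, y) * v$j) * (\<Sum>j\<in>UNIV. f (j, y) * v$j)
        = (\<Sum>i\<in>UNIV. \<Sum>j\<in>UNIV. (cnj (f (i, y)) * cnj (v$i)) * (f (j, y) * v$j))"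
      by (simp only: sum_product)
    also have "\<dots> = (\<Sum>i\<in>UNIV. \<Sum>j\<in>UNIV. g i j y)"
      unfolding g_def by (intro sum.cong refl) (simp only: mult_ac)
    finally show "(\<Sum>i\<in>UNIV. \<Sum>j\<in>UNIV. g i j y) = cnj (\<Sum>j\<in>UNIV. f (j, y) * v$j) * (\<Sum>j\<in>UNIV. f (j, y) * v$j)"
      by simp
  qed
  finally show ?thesis .
qed

lemma eig_nonneg:
  fixes f :: "('x::finite) \<times> ('y::finite) \<Rightarrow> complex"
  assumes d: "det (\<chi> i j. (if i = j then e else 0) - reduced_density f $ i $ j) = 0"
  shows "Re e \<ge> 0"
proof -
  define K where "K = (\<chi> i j. (if i = j then e else 0) - reduced_density f $ i $ j)"
  have "\<not> inj ((*v) K)"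
    using det_nz_iff_inj_gen[OF matrix_vector_mul_linear_gen[of K]] d
    unfolding matrix_of_matrix_vector_mul K_def by simp
  then obtain x y where xy: "x \<noteq> y" "K *v x = K *v y" unfolding inj_def by blast
  define v where "v = x - y"
  have v0: "v \<noteq> 0" using xy unfolding v_def by simp
  have Kv: "K *v v = 0" using xy unfolding v_def by (simp add: matrix_vector_mult_diff_distrib)
  have ev: "(reduced_density f *v v) $ i = e * v $ i" for i
  proof -
    have "(K *v v) $ i = 0" using Kv by simp
    then have "(\<Sum>j\<in>UNIV. ((if i = j then e else 0) - reduced_density f $ i $ j) * v$j) = 0"
      unfolding K_def matrix_vector_mult_def by simp
    then have "(\<Sum>j\<in>UNIV. (if i = j then e else 0) * v$j) - (\<Sum>j\<in>UNIV. reduced_density f $ i $ j * v$j) = 0"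
      by (simp add: left_diff_distrib sum_subtractf)
    moreover have "(\<Sum>j\<in>UNIV. (if i = j then e else 0) * v$j) = e * v$i"
    proof -
      have "(\<Sum>j\<in>UNIV. (if i = j then e else 0) * v$j) = (\<Sum>j\<in>UNIV. if i = j then e * v$j else 0)"
        by (rule sum.cong) auto
      then show ?thesis by simp
    qed
    ultimately show ?thesis unfolding matrix_vector_mult_def by simp
  qed
  have cnjsq: "cnj z * z = of_real ((cmod z)\<^sup>2)" for z :: complex
    by (metis complex_norm_square mult.commute)
  define S where "S = (\<Sum>i\<in>UNIV. (cmod (v$i))\<^sup>2)"
  define W where "W = (\<Sum>y\<in>UNIV. (cmod (\<Sum>j\<in>UNIV. f (j, y) * v$j))\<^sup>2)"
  have Spos: "S > 0"
  proof -
    obtain i where "v$i \<noteq> 0" using v0 by (metis vec_eq_iff zero_index)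
    then have "(cmod (v$i))\<^sup>2 > 0" by simp
    moreover have "(cmod (v$i))\<^sup>2 \<le> S" unfolding S_def
      by (rule member_le_sum) auto
    ultimately show ?thesis by linarith
  qed
  have W0: "W \<ge> 0" unfolding W_def by (intro sum_nonneg) auto
  have "(\<Sum>i\<in>UNIV. cnj (v$i) * (reduced_density f *v v)$i) = e * (\<Sum>i\<in>UNIV. cnj (v$i) * v$i)"
    by (simp add: ev sum_distrib_left mult_ac)
  also have "(\<Sum>i\<in>UNIV. cnj (v$i) * v$i) = of_real S"
    unfolding S_def of_real_sum by (rule sum.cong[OF refl]) (rule cnjsq)
  finally have eq1: "(\<Sum>i\<in>UNIV. cnj (v$i) * (reduced_density f *v v)$i) = e * of_real S" .
  have eq2: "(\<Sum>i\<in>UNIV. cnj (v$i) * (reduced_density f *v v)$i) = of_real W"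
    unfolding quad_form W_def of_real_sum by (rule sum.cong[OF refl]) (rule cnjsq)
  have "Re e * S = W" using arg_cong[OF trans[OF eq1[symmetric] eq2], of Re] by simp
  then have "Re e = W / S" using Spos by (simp add: field_simps)
  then show ?thesis using W0 Spos by simp
qed




lemma det_rowop:
  fixes M :: "'a::comm_ring_1 ^'n^'n"
  assumes "i \<noteq> j"
  shows "det (\<chi> k. if k = i then M$i - M$j else M$k) = det M"
proof -
  have h: "row k M = M $ k" for k unfolding row_def by (simp add: vec_eq_iff)
  have e: "(\<chi> k. if k = i then M$i + (-1) *s M$j else M$k) = (\<chi> k. if k = i then M$i - M$j else M$k)"
    by (simp add: vec_eq_iff)
  show ?thesis using det_row_operation[OF assms, of M "-1", unfolded h e] .
qed
lemma charpoly_dvd: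
  fixes A :: "'a::comm_ring_1 ^'n^'n"
  assumes TE: "T \<subseteq> E"
    and repT: "\<And>i. i \<in> E \<Longrightarrow> rep i \<in> T"
    and rowE: "\<And>i. i \<in> E \<Longrightarrow> A$i = A$(rep i)"
    and rowN: "\<And>i. i \<notin> E \<Longrightarrow> A$i = 0"
  shows "[:0,1:] ^ (CARD('n) - card T) dvd charpoly A"
proof -
  define M where "M = (\<chi> i j. (if i = j then [:0, 1:] else 0) - [:A $ i $ j:])"
  have cp: "charpoly A = det M" unfolding charpoly_def M_def ..
  define MZ where "MZ Z = (\<chi> k. if k \<in> Z then M$k - M$(rep k) else M$k)" for Z
  have ind: "finite Z \<Longrightarrow> Z \<subseteq> E - T \<Longrightarrow> det (MZ Z) = det M" for Z
  proof (induction Z rule: finite_induct)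
    case empty
    then show ?case unfolding MZ_def by (simp add: vec_eq_iff)
  next
    case (insert z Z)
    have zET: "z \<in> E - T" using insert.prems by simp
    have ZET: "Z \<subseteq> E - T" using insert.prems by simp
    have rz: "rep z \<in> T" using repT zET by simp
    have neq: "z \<noteq> rep z" using rz zET by (metis DiffD2)
    have rzZ: "rep z \<notin> Z" using ZET rz by (metis DiffD2 subsetD)
    have zZ: "z \<notin> Z" by (rule insert.hyps(2))
    have eqn: "MZ (insert z Z) = (\<chi> k. if k = z then MZ Z $ z - MZ Z $ (rep z) else MZ Z $ k)"
      unfolding MZ_def using zZ rzZ by (simp add: vec_eq_iff)
    have "det (MZ (insert z Z)) = det (MZ Z)" by (subst eqn, rule det_rowop[OF neq])
    moreover have "det (MZ Z) = det M" using insert.IH ZET by simp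
    ultimately show ?case by (rule trans)
  qed
  define D where "D = MZ (E - T)"
  have dD: "det D = det M" unfolding D_def by (rule ind) auto
  have Dent: "[:0,1:] dvd D$i$j" if "i \<notin> T" for i j
  proof (cases "i \<in> E")
    case True
    have "D$i$j = M$i$j - M$(rep i)$j" unfolding D_def MZ_def using True that by simp
    also have "\<dots> = (if i = j then [:0, 1:] else 0) - (if rep i = j then [:0, 1:] else 0)"
      unfolding M_def using rowE[OF True] by simp
    finally have "D$i$j = (if i = j then [:0, 1:] else 0) - (if rep i = j then [:0, 1:] else 0)" .
    then show ?thesis by (simp only:) (intro dvd_diff; simp)
  next
    case False
    have "D$i$j = M$i$j" unfolding D_def MZ_def using False by simp
    also have "\<dots> = (if i = j then [:0, 1:] else 0)"
      unfolding M_def using rowN[OF False] by simp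
    finally show ?thesis by simp
  qed
  have cT: "card (UNIV - T) = CARD('n) - card T" by (rule card_Diff_subset) auto
  have trm: "[:0,1:] ^ (CARD('n) - card T) dvd of_int (sign p) * prod (\<lambda>i. D$i$p i) UNIV" for p
  proof -
    have s1: "prod (\<lambda>i. D$i$p i) UNIV = prod (\<lambda>i. D$i$p i) (UNIV - T) * prod (\<lambda>i. D$i$p i) T"
      by (rule prod.subset_diff) auto
    have s2: "prod (\<lambda>_. [:0,1:]) (UNIV - T) dvd prod (\<lambda>i. D$i$p i) (UNIV - T)"
      by (rule prod_dvd_prod) (use Dent in auto)
    have s3: "prod (\<lambda>_. [:0,1:]) (UNIV - T) = [:0,1:] ^ (CARD('n) - card T)"
      using cT by simp
    have h1: "[:0,1:] ^ (CARD('n) - card T) dvd prod (\<lambda>i. D$i$p i) (UNIV - T)"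
      using s2 unfolding s3 .
    have h2: "[:0,1:] ^ (CARD('n) - card T) dvd prod (\<lambda>i. D$i$p i) UNIV"
      unfolding s1 by (rule dvd_mult2[OF h1])
    show ?thesis by (rule dvd_mult[OF h2])
  qed
  have "[:0,1:] ^ (CARD('n) - card T) dvd det D"
    unfolding det_def by (rule dvd_sum, rule trm)
  then show ?thesis using dD cp by simp
qed




lemma length_filter_mono:
  assumes "\<And>x. P x \<Longrightarrow> Q x"
  shows "length (filter P xs) \<le> length (filter Q xs)"
  using assms by (induction xs) auto

lemma poly_lin_prod: "poly (\<Prod>e\<leftarrow>es. [:- e, 1:]) (x::complex) = (\<Prod>e\<leftarrow>es. x - e)"
  by (induction es) (auto simp: algebra_simps)

lemma poly_lin_prod_root: "(x::complex) \<in> set es \<Longrightarrow> poly (\<Prod>e\<leftarrow>es. [:- e, 1:]) x = 0"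
  unfolding poly_lin_prod by (induction es) auto

lemma Re_sum_list: "Re (sum_list xs) = sum_list (map Re xs)"
  by (induction xs) auto

theorem theorem3:
  fixes SI :: "(('a::finite \<Rightarrow> bool) \<times> ('b::finite \<Rightarrow> bool)) set"
    and D R :: "'a set"
    and r :: real
  assumes nonempty: "SI \<noteq> {}"
    and rD: "real (card R) = r * real (card D)"
    and bdry: "\<forall>sA sB sA' sB'. (sA, sB) \<in> SI \<longrightarrow> (sA', sB') \<in> SI \<longrightarrow> sB = sB'
                 \<longrightarrow> (\<forall>p\<in>D. sA p = sA' p)"
    and region: "\<forall>a1 a1' a2 a2'.
        (\<exists>sB. (a1, sB) \<in> SI) \<longrightarrow> (\<exists>sB. (a1', sB) \<in> SI) \<longrightarrow>
        (\<exists>sB. (a2, sB) \<in> SI) \<longrightarrow> (\<exists>sB. (a2', sB) \<in> SI) \<longrightarrow>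
        (\<forall>p\<in>R. a1 p = a2 p) \<longrightarrow> (\<forall>p\<in>R. a1' p = a2' p) \<longrightarrow>
        card {sB. (a1, sB) \<in> SI \<and> (a1', sB) \<in> SI} = card {sB. (a2, sB) \<in> SI \<and> (a2', sB) \<in> SI}"
  shows "vn_entropy (reduced_density
           (\<lambda>s. (if s \<in> SI then 1 else 0) / complex_of_real (sqrt (real (card SI)))))
         \<le> r * real (card D) * ln 2"
proof -
  define N where "N = card SI"
  define f where "f = (\<lambda>s. (if s \<in> SI then 1 else 0) / complex_of_real (sqrt (real (card SI))))"
  define \<rho> where "\<rho> = reduced_density f"
  have Npos: "N > 0" unfolding N_def using nonempty by (simp add: card_gt_0_iff)
  define cnt where "cnt x x' = card {y. (x, y) \<in> SI \<and> (x', y) \<in> SI}" for x x'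
  have rho: "\<rho> $ x $ x' = of_nat (cnt x x') / of_nat N" for x x'
  proof -
    have sq: "complex_of_real (sqrt (real N)) * complex_of_real (sqrt (real N)) = of_nat N"
      by (metis of_real_mult of_real_of_nat_eq real_sqrt_mult_self abs_of_nat)
    have t: "cnj (f (x, y)) * f (x', y) = (if (x, y) \<in> SI \<and> (x', y) \<in> SI then 1 / of_nat N else 0)" for y
      unfolding f_def N_def[symmetric] using sq by (auto simp: field_simps)
    have "\<rho> $ x $ x' = (\<Sum>y\<in>UNIV. if (x, y) \<in> SI \<and> (x', y) \<in> SI then 1 / of_nat N else 0)"
      unfolding \<rho>_def reduced_density_def using t by simp
    also have "\<dots> = (\<Sum>y\<in>{y. (x, y) \<in> SI \<and> (x', y) \<in> SI}. 1 / of_nat N)"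
      by (simp add: sum.If_cases)
    also have "\<dots> = of_nat (cnt x x') / of_nat N" unfolding cnt_def by simp
    finally show ?thesis .
  qed
  define E where "E = {a. \<exists>y. (a, y) \<in> SI}"
  have rowN: "\<rho> $ i = 0" if "i \<notin> E" for i
  proof -
    have "cnt i j = 0" for j unfolding cnt_def using that unfolding E_def by auto
    then show ?thesis by (simp add: vec_eq_iff rho)
  qed
  define rep where "rep a = (SOME b. b \<in> E \<and> (\<forall>p\<in>R. b p = a p))" for a
  have repE: "rep a \<in> E \<and> (\<forall>p\<in>R. rep a p = a p)" if "a \<in> E" for a
    unfolding rep_def by (rule someI[of _ a]) (use that in simp)
  have rep_eq: "rep a = rep a'" if "\<forall>p\<in>R. a p = a' p" for a a'
  proof -
    have "(\<lambda>b. b \<in> E \<and> (\<forall>p\<in>R. b p = a p)) = (\<lambda>b. b \<in> E \<and> (\<forall>p\<in>R. b p = a' p))"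
      using that by auto
    then show ?thesis unfolding rep_def by simp
  qed
  define T where "T = rep ` E"
  have TE: "T \<subseteq> E" unfolding T_def using repE by auto
  have repT: "rep i \<in> T" if "i \<in> E" for i unfolding T_def using that by simp
  have rowE: "\<rho> $ i = \<rho> $ (rep i)" if iE: "i \<in> E" for i
  proof -
    have ri: "rep i \<in> E" "\<forall>p\<in>R. i p = rep i p" using repE[OF iE] by auto
    have "cnt i j = cnt (rep i) j" for j
    proof (cases "j \<in> E")
      case True
      show ?thesis unfolding cnt_def
        by (rule region[rule_format]) (use iE ri True in \<open>auto simp: E_def\<close>)
    next
      case False
      then show ?thesis unfolding cnt_def E_def by auto
    qed
    then show ?thesis by (simp add: vec_eq_iff rho)
  qed
  have cardT: "card T \<le> 2 ^ card R"
  proof -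
    have inj: "inj_on (\<lambda>a. {p\<in>R. a p}) T"
    proof (rule inj_onI)
      fix t t' assume t: "t \<in> T" and t': "t' \<in> T" and eq: "{p\<in>R. t p} = {p\<in>R. t' p}"
      obtain a where a: "a \<in> E" "t = rep a" using t unfolding T_def by auto
      obtain a' where a': "a' \<in> E" "t' = rep a'" using t' unfolding T_def by auto
      have "\<forall>p\<in>R. t p = t' p" using eq by blast
      then have "\<forall>p\<in>R. a p = a' p" using repE[OF a(1)] repE[OF a'(1)] a a' by auto
      then show "t = t'" using a a' rep_eq by blast
    qed
    have "card T \<le> card (Pow R)"
      by (rule card_inj_on_le[OF inj]) auto
    then show ?thesis by (simp add: card_Pow)
  qed
  define n where "n = CARD('a \<Rightarrow> bool)"
  note cpp = charpoly_props[of \<rho>]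
  have lc: "lead_coeff (charpoly \<rho>) = 1" using cpp by simp
  obtain es0 where "charpoly \<rho> = (\<Prod>e\<leftarrow>es0. [:- e, 1:])" using complex_split[OF lc] by blast
  then have ex: "\<exists>es. charpoly \<rho> = (\<Prod>e\<leftarrow>es. [:- e, 1:])" by blast
  define es where "es = eigenvalue_list \<rho>"
  have es: "charpoly \<rho> = (\<Prod>e\<leftarrow>es. [:- e, 1:])"
    unfolding es_def eigenvalue_list_def by (rule someI_ex[OF ex])
  note L = lin_prod_list[of es]
  have les: "length es = n" using L cpp es unfolding n_def by metis
  have tr: "(\<Sum>i\<in>UNIV. \<rho> $ i $ i) = 1"
  proof -
    have "SI = Sigma UNIV (\<lambda>i. {y. (i, y) \<in> SI})" by auto
    then have "N = card (Sigma UNIV (\<lambda>i. {y. (i, y) \<in> SI}))" unfolding N_def by simp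
    also have "\<dots> = (\<Sum>i\<in>UNIV. card {y. (i, y) \<in> SI})" by (rule card_SigmaI) auto
    finally have cN: "N = (\<Sum>i\<in>UNIV. cnt i i)" unfolding cnt_def by simp
    have "(\<Sum>i\<in>UNIV. \<rho> $ i $ i) = (\<Sum>i\<in>UNIV. of_nat (cnt i i)) / (of_nat N :: complex)"
      by (simp add: rho sum_divide_distrib)
    also have "(\<Sum>i\<in>UNIV. of_nat (cnt i i)) = (of_nat N :: complex)" using cN by simp
    finally show ?thesis using Npos by simp
  qed
  have sumes: "sum_list es = 1"
  proof -
    have n0: "n = Suc (n - 1)" unfolding n_def by simp
    have "coeff (charpoly \<rho>) (n - 1) = - sum_list es" using L les n0 es by metis
    moreover have "coeff (charpoly \<rho>) (n - 1) = - 1" using cpp tr unfolding n_def by simp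
    ultimately show ?thesis by simp
  qed
  have nonneg: "Re e \<ge> 0" if e: "e \<in> set es" for e
  proof -
    have "poly (charpoly \<rho>) e = 0"
      unfolding es using e by (rule poly_lin_prod_root)
    then have "det (\<chi> i j. poly ((if i = j then [:0, 1:] else 0) - [:\<rho> $ i $ j:]) e) = 0"
      unfolding charpoly_def poly_det by simp
    moreover have "(\<chi> i j. poly ((if i = j then [:0, 1:] else 0) - [:\<rho> $ i $ j:]) e)
        = (\<chi> i j. (if i = j then e else 0) - reduced_density f $ i $ j)"
      unfolding \<rho>_def by (simp add: vec_eq_iff)
    ultimately have "det (\<chi> i j. (if i = j then e else 0) - reduced_density f $ i $ j) = 0"
      by simp
    then show ?thesis by (rule eig_nonneg)
  qed
  have dv: "[:0,1:] ^ (CARD('a \<Rightarrow> bool) - card T) dvd charpoly \<rho>"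
    by (rule charpoly_dvd[OF TE repT rowE rowN])
  have cp0: "charpoly \<rho> \<noteq> 0" using lc by auto
  have "n - card T \<le> order 0 (charpoly \<rho>)"
    using order_divides[of 0 "n - card T" "charpoly \<rho>"] dv cp0 unfolding n_def by simp
  also have "\<dots> = length (filter (\<lambda>e. e = 0) es)" unfolding es by (rule order0_prod_list)
  finally have z: "n - card T \<le> length (filter (\<lambda>e. e = 0) es)" .
  have "length (filter (\<lambda>e. e = 0) es) + length (filter (\<lambda>e. \<not> e = 0) es) = n"
    using sum_length_filter_compl[of "\<lambda>e. e = 0" es] les by simp
  then have nz: "length (filter (\<lambda>e. e \<noteq> 0) es) \<le> card T" using z by linarith
  define xs where "xs = map Re es"
  have xnn: "\<forall>x\<in>set xs. x \<ge> 0" unfolding xs_def using nonneg by auto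
  have xs1: "sum_list xs = 1" unfolding xs_def using sumes Re_sum_list[of es] by simp
  define K where "K = length (filter (\<lambda>x. x \<noteq> 0) xs)"
  have "K = length (filter (\<lambda>e. Re e \<noteq> 0) es)" unfolding K_def xs_def by (simp add: filter_map o_def)
  also have "\<dots> \<le> length (filter (\<lambda>e. e \<noteq> 0) es)" by (rule length_filter_mono) auto
  finally have K: "K \<le> 2 ^ card R" using nz cardT by linarith
  have ent: "vn_entropy \<rho> = - (\<Sum>x\<leftarrow>xs. x * ln x)"
    unfolding vn_entropy_def es_def[symmetric] xs_def by (simp add: o_def)
  have "- (\<Sum>x\<leftarrow>xs. x * ln x) \<le> ln (real K)" unfolding K_def by (rule entropy_bound[OF xnn xs1])
  also have "\<dots> \<le> ln (2 ^ card R)"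
  proof (cases "K = 0")
    case True then show ?thesis by simp
  next
    case False then show ?thesis using K by (subst ln_le_cancel_iff) auto
  qed
  also have "\<dots> = real (card R) * ln 2" by (simp add: ln_realpow)
  also have "\<dots> = r * real (card D) * ln 2" using rD by simp
  finally show ?thesis using ent unfolding \<rho>_def f_def by simp
qed


end
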